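(* For any signed graph $(G,\sigma)$, $\chi_c\big((G,\sigma)\square(G,\sigma)\big)=\chi_c(G,\sigma)$.
   Context: A signed graph $(G,\sigma)$ is a finite graph $G$ (multiple edges allowed, no loops) with a signature $\sigma:E(G)\to\{+1,-1\}$. For real $r\ge 2$, $C^r$ is the circle of circumference $r$, $d_{C^r}(x,y)=\min\{|x-y|,r-|x-y|\}$, $\overline{x}=x+r/2\pmod r$. A circular $r$-coloring of $(G,\sigma)$ is $f:V(G)\to C^r$ with $d_{C^r}(f(u),f(v))\ge1$ for each positive edge $uv$ and $d_{C^r}(f(u),\overline{f(v)})\ge1$ for each negative edge $uv$; $\chi_c(G,\sigma)$ is the infimum of such $r\ge2$. The Type 1 Cartesian product $(G,\sigma)\square(H,\tau)$ has vertex set $V(G)\times V(H)$, with $(u,x)(v,y)$ an edge iff either $u=v$ and $xy\in E(H)$, or $x=y$ and $uv\in E(G)$; the edge $(u,x)(v,x)$ has sign $\sigma(uv)$ and the edge $(u,x)(u,y)$ has sign $\tau(xy)$. *)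

theory Defs
  imports Complex_Main
begin

text \<open>A signed (multi)graph: vertex set, edge set, an endpoint map (orientation is
irrelevant for everything below), and a signature with values in {+1,-1}.\<close>

record ('v, 'e) sgraph =
  verts :: "'v set"
  edges :: "'e set"
  ends  :: "'e \<Rightarrow> 'v \<times> 'v"
  sgn   :: "'e \<Rightarrow> int"

definition wf_sgraph :: "('v, 'e) sgraph \<Rightarrow> bool" where
  "wf_sgraph G \<longleftrightarrow> finite (verts G) \<and> finite (edges G) \<and>
     (\<forall>e\<in>edges G. fst (ends G e) \<in> verts G \<and> snd (ends G e) \<in> verts G
        \<and> fst (ends G e) \<noteq> snd (ends G e) \<and> sgn G e \<in> {1, -1})"

text \<open>Points of the circle C^r are represented by reals in [0, r).\<close>

definition cdist :: "real \<Rightarrow> real \<Rightarrow> real \<Rightarrow> real" where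
  "cdist r x y = min \<bar>x - y\<bar> (r - \<bar>x - y\<bar>)"

definition antipode :: "real \<Rightarrow> real \<Rightarrow> real" where
  "antipode r x = (if x + r / 2 < r then x + r / 2 else x - r / 2)"

definition circ_coloring :: "('v, 'e) sgraph \<Rightarrow> real \<Rightarrow> ('v \<Rightarrow> real) \<Rightarrow> bool" where
  "circ_coloring G r f \<longleftrightarrow>
     (\<forall>v\<in>verts G. 0 \<le> f v \<and> f v < r) \<and>
     (\<forall>e\<in>edges G.
        (sgn G e = 1 \<longrightarrow> cdist r (f (fst (ends G e))) (f (snd (ends G e))) \<ge> 1) \<and>
        (sgn G e = -1 \<longrightarrow> cdist r (f (fst (ends G e))) (antipode r (f (snd (ends G e)))) \<ge> 1))"

definition chi_c :: "('v, 'e) sgraph \<Rightarrow> real" where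
  "chi_c G = Inf {r. r \<ge> 2 \<and> (\<exists>f. circ_coloring G r f)}"

text \<open>Type 1 Cartesian product. Edges of the product: (u, f) for u a vertex of G and
f an edge of H (copy of f in the H-fibre over u), and (e, x) for e an edge of G and
x a vertex of H.\<close>

definition sprod :: "('v, 'e) sgraph \<Rightarrow> ('w, 'f) sgraph \<Rightarrow>
    ('v \<times> 'w, ('v \<times> 'f) + ('e \<times> 'w)) sgraph" where
  "sprod G H = \<lparr> verts = verts G \<times> verts H,
     edges = Inl ` (verts G \<times> edges H) \<union> Inr ` (edges G \<times> verts H),
     ends = case_sum (\<lambda>(u, f). ((u, fst (ends H f)), (u, snd (ends H f))))
                     (\<lambda>(e, x). ((fst (ends G e), x), (snd (ends G e), x))),
     sgn = case_sum (\<lambda>(u, f). sgn H f) (\<lambda>(e, x). sgn G e) \<rparr>"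

end

theory Submission
  imports Defs
begin

definition md :: "real \<Rightarrow> real \<Rightarrow> real" where
  "md r x = x - r * of_int (floor (x / r))"

lemma md_bounds: assumes "r > 0" shows "0 \<le> md r x" "md r x < r"
proof -
  have "md r x = r * frac (x / r)" using assms
    by (simp add: md_def frac_def algebra_simps)
  then show "0 \<le> md r x" "md r x < r" using assms frac_ge_0[of "x/r"] frac_lt_1[of "x/r"]
    by auto
qed

lemma md_diff: "\<exists>k::int. md r x = x + of_int k * r"
  by (rule exI[of _ "- floor (x / r)"]) (simp add: md_def algebra_simps)

lemma antipode_bounds:
  assumes "r > 0" "0 \<le> y" "y < r"
  shows "0 \<le> antipode r y" "antipode r y < r"
  using assms by (auto simp: antipode_def)

lemma antipode_diff: "\<exists>k::int. antipode r y = y + r / 2 + of_int k * r"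
proof (cases "y + r / 2 < r")
  case True then show ?thesis by (intro exI[of _ 0]) (simp add: antipode_def)
next
  case False then show ?thesis by (intro exI[of _ "-1"]) (simp add: antipode_def)
qed

lemma cdist_shift:
  assumes r: "r > 0" and "0 \<le> a" "a < r" "0 \<le> b" "b < r" "0 \<le> a'" "a' < r" "0 \<le> b'" "b' < r"
    and k: "a - b = a' - b' + of_int k * r"
  shows "cdist r a b = cdist r a' b'"
proof -
  have h1: "of_int k * r < 2 * r" and h2: "(- 2) * r < of_int k * r" using assms by linarith+
  have "of_int k < (2::real)" using mult_right_less_imp_less[OF h1] r by simp
  moreover have "- 2 < (of_int k :: real)" using mult_right_less_imp_less[OF h2] r by simp
  ultimately have "of_int k < (2::real)" "- 2 < (of_int k :: real)" by auto
  then have "k = 0 \<or> k = 1 \<or> k = -1" by linarith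
  then show ?thesis using assms by (auto simp: cdist_def)
qed

lemma key:
  assumes r: "r > 0" and "0 \<le> a" "a < r" "0 \<le> b" "b < r"
  shows "cdist r (md r (a + c)) (md r (b + c)) = cdist r a b"
    and "cdist r (md r (a + c)) (antipode r (md r (b + c))) = cdist r a (antipode r b)"
proof -
  obtain k1 where k1: "md r (a + c) = a + c + of_int k1 * r" using md_diff by blast
  obtain k2 where k2: "md r (b + c) = b + c + of_int k2 * r" using md_diff by blast
  obtain k3 where k3: "antipode r (md r (b + c)) = md r (b + c) + r / 2 + of_int k3 * r"
    using antipode_diff by blast
  obtain k4 where k4: "antipode r b = b + r / 2 + of_int k4 * r"
    using antipode_diff by blast
  have m1: "0 \<le> md r (a + c)" "md r (a + c) < r" using md_bounds r by auto
  have m2: "0 \<le> md r (b + c)" "md r (b + c) < r" using md_bounds r by auto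
  have m3: "0 \<le> antipode r (md r (b + c))" "antipode r (md r (b + c)) < r"
    using antipode_bounds[OF r m2] by auto
  have m4: "0 \<le> antipode r b" "antipode r b < r" using antipode_bounds assms by auto
  have e1: "of_int (k1 - k2) * r = of_int k1 * r - of_int k2 * r"
    by (simp add: algebra_simps)
  have e2: "of_int (k1 - k2 - k3 + k4) * r = of_int k1 * r - of_int k2 * r - of_int k3 * r + of_int k4 * r"
    by (simp add: algebra_simps)
  show "cdist r (md r (a + c)) (md r (b + c)) = cdist r a b"
    by (rule cdist_shift[OF r m1 m2 assms(2-5), of "k1 - k2"])
       (use k1 k2 e1 in linarith)
  show "cdist r (md r (a + c)) (antipode r (md r (b + c))) = cdist r a (antipode r b)"
    by (rule cdist_shift[OF r m1 m3 assms(2,3) m4, of "k1 - k2 - k3 + k4"])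
       (use k1 k2 k3 k4 e2 in linarith)
qed

lemma col_restrict:
  assumes "circ_coloring (sprod G G) r F" "x \<in> verts G"
  shows "circ_coloring G r (\<lambda>u. F (u, x))"
proof -
  have V: "\<And>v. v \<in> verts G \<Longrightarrow> 0 \<le> F (v, x) \<and> F (v, x) < r"
    using assms by (auto simp: circ_coloring_def sprod_def)
  have E: "\<And>e. e \<in> edges G \<Longrightarrow>
        (sgn G e = 1 \<longrightarrow> cdist r (F (fst (ends G e), x)) (F (snd (ends G e), x)) \<ge> 1) \<and>
        (sgn G e = -1 \<longrightarrow> cdist r (F (fst (ends G e), x)) (antipode r (F (snd (ends G e), x))) \<ge> 1)"
  proof -
    fix e assume e: "e \<in> edges G"
    have "Inr (e, x) \<in> edges (sprod G G)" using e assms(2) by (simp add: sprod_def)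
    note H = assms(1)[unfolded circ_coloring_def, THEN conjunct2, rule_format, OF this]
    then show "?thesis e" by (simp add: sprod_def)
  qed
  show ?thesis using V E by (simp add: circ_coloring_def)
qed

lemma col_lift:
  assumes wf: "wf_sgraph G" and r: "r > 0" and f: "circ_coloring G r f"
  shows "circ_coloring (sprod G G) r (\<lambda>(u, v). md r (f u + f v))"
proof -
  have fb: "\<And>v. v \<in> verts G \<Longrightarrow> 0 \<le> f v \<and> f v < r" using f by (simp add: circ_coloring_def)
  have fe: "\<And>e. e \<in> edges G \<Longrightarrow>
        (sgn G e = 1 \<longrightarrow> cdist r (f (fst (ends G e))) (f (snd (ends G e))) \<ge> 1) \<and>
        (sgn G e = -1 \<longrightarrow> cdist r (f (fst (ends G e))) (antipode r (f (snd (ends G e)))) \<ge> 1)"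
    using f by (simp add: circ_coloring_def)
  have ev: "\<And>e. e \<in> edges G \<Longrightarrow> fst (ends G e) \<in> verts G \<and> snd (ends G e) \<in> verts G"
    using wf by (simp add: wf_sgraph_def)
  show ?thesis unfolding circ_coloring_def
  proof (rule conjI[OF ballI ballI])
    fix p assume "p \<in> verts (sprod G G)"
    then show "0 \<le> (case p of (u, v) \<Rightarrow> md r (f u + f v)) \<and>
               (case p of (u, v) \<Rightarrow> md r (f u + f v)) < r"
      using md_bounds[OF r] by (auto split: prod.splits)
  next
    fix q assume q: "q \<in> edges (sprod G G)"
    then show "(sgn (sprod G G) q = 1 \<longrightarrow>
        1 \<le> cdist r ((case fst (ends (sprod G G) q) of (u, v) \<Rightarrow> md r (f u + f v)))
                ((case snd (ends (sprod G G) q) of (u, v) \<Rightarrow> md r (f u + f v)))) \<and>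
       (sgn (sprod G G) q = - 1 \<longrightarrow>
        1 \<le> cdist r ((case fst (ends (sprod G G) q) of (u, v) \<Rightarrow> md r (f u + f v)))
                (antipode r ((case snd (ends (sprod G G) q) of (u, v) \<Rightarrow> md r (f u + f v)))))"
    proof (cases q)
      case (Inl p)
      then obtain u e where p: "q = Inl (u, e)" "u \<in> verts G" "e \<in> edges G"
        using q by (auto simp: sprod_def)
      have a: "0 \<le> f (fst (ends G e)) \<and> f (fst (ends G e)) < r"
        "0 \<le> f (snd (ends G e)) \<and> f (snd (ends G e)) < r" using fb ev p by auto
      note k = key[OF r conjunct1[OF a(1)] conjunct2[OF a(1)] conjunct1[OF a(2)] conjunct2[OF a(2)], of "f u"]
      show ?thesis using p fe[OF p(3)] k by (simp add: sprod_def add.commute)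
    next
      case (Inr p)
      then obtain e x where p: "q = Inr (e, x)" "e \<in> edges G" "x \<in> verts G"
        using q by (auto simp: sprod_def)
      have a: "0 \<le> f (fst (ends G e)) \<and> f (fst (ends G e)) < r"
        "0 \<le> f (snd (ends G e)) \<and> f (snd (ends G e)) < r" using fb ev p by auto
      note k = key[OF r conjunct1[OF a(1)] conjunct2[OF a(1)] conjunct1[OF a(2)] conjunct2[OF a(2)], of "f x"]
      show ?thesis using p fe[OF p(2)] k by (simp add: sprod_def)
    qed
  qed
qed

theorem proposition1:
  fixes G :: "('v, 'e) sgraph"
  assumes "wf_sgraph G"
  shows "chi_c (sprod G G) = chi_c G"
proof -
  have "{r. r \<ge> 2 \<and> (\<exists>f. circ_coloring (sprod G G) r f)} = {r. r \<ge> 2 \<and> (\<exists>f. circ_coloring G r f)}"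
  proof (cases "verts G = {}")
    case True
    then have "edges G = {}" using assms by (auto simp: wf_sgraph_def)
    with True show ?thesis by (auto simp: circ_coloring_def sprod_def)
  next
    case False
    then obtain x where x: "x \<in> verts G" by blast
    show ?thesis
    proof (intro set_eqI iffI)
      fix r assume "r \<in> {r. r \<ge> 2 \<and> (\<exists>f. circ_coloring (sprod G G) r f)}"
      then show "r \<in> {r. r \<ge> 2 \<and> (\<exists>f. circ_coloring G r f)}"
        using col_restrict[OF _ x] by blast
    next
      fix r assume "r \<in> {r. r \<ge> 2 \<and> (\<exists>f. circ_coloring G r f)}"
      then obtain f where "r \<ge> 2" "circ_coloring G r f" by blast
      then show "r \<in> {r. r \<ge> 2 \<and> (\<exists>f. circ_coloring (sprod G G) r f)}"
        using col_lift[OF assms, of r f] by auto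
    qed
  qed
  then show ?thesis by (simp add: chi_c_def)
qed

end
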